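(* Let $k$ be a field and $\mathcal{B}=\bigoplus_{p\in\mathbb{Z}}\mathcal{B}_p$ a connected graded associative unital $k$-algebra ($\mathcal{B}_{-n}=0$ for $n>0$, $\mathcal{B}_0=k$), with $V:=\mathcal{B}_1$ finite dimensional, and assume $\mathcal{B}$ is generated by $V$, i.e. $\mathcal{B}=TV/(R)$ with $R$ a homogeneous subspace. Let $A_{gr}(\mathcal{B}):=A_{gr}(u,m)$ where $u:k\to\mathcal{B}$ is the unit and $m:\mathcal{B}\otimes\mathcal{B}\to\mathcal{B}$ the multiplication. Then $A_{gr}(\mathcal{B})$ is generated as an algebra by $C_1=\mathrm{End}(V)^*$; that is, the map $T(C_1)\hookrightarrow T(C_{gr})\to A_{gr}(\mathcal{B})$ is surjective.
   Context: For a graded vector space $W=\bigoplus_{p\in\mathbb{Z}}W_p$ with every $W_p$ finite dimensional, set $C_p=\mathrm{End}(W_p)^*$ and $C_{gr}=\bigoplus_p C_p$; with a basis $\{x^{(p)}_i\}$ of $W_p$, $C_p$ has the dual (comatrix) basis $\{t^{(p)}{}_i^j\}$ with $\Delta(t^{(p)}{}_i^j)=\sum_k t^{(p)}{}_i^k\otimes t^{(p)}{}_k^j$, $\epsilon(t^{(p)}{}_i^j)=\delta_i^j$, and $W$ is a graded $C_{gr}$-comodule via $\rho(x^{(p)}_i)=\sum_j t^{(p)}{}_i^j\otimes x^{(p)}_j$. $T(C_{gr})$ is the tensor algebra with the bialgebra structure extending that of $C_{gr}$, so all $W^{\otimes n}$ are $T(C_{gr})$-comodules (with $W^{\otimes0}=k$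 trivial). For a family $F$ of linear maps $f:W^{\otimes n}\to W^{\otimes m}$, $\mathcal{I}_F$ is the ideal of $T(C_{gr})$ generated by the coefficients (in a basis of $W^{\otimes m}$) of $(\mathrm{id}\otimes f)\rho(z)-\rho(f(z))$ for $z$ running over basis tensors of $W^{\otimes n}$, $f\in F$; $A_{gr}(F)=T(C_{gr})/\mathcal{I}_F$ is a bialgebra and $W$ is a graded $A_{gr}(F)$-comodule with all $f\in F$ colinear. Here $W=\mathcal{B}$ and $C_1=\mathrm{End}(\mathcal{B}_1)^*$. *)

theory Defs
  imports Main "HOL.Vector_Spaces" "HOL-Library.Poly_Mapping"
begin

text \<open>Elements of the tensor algebra T(C) on a vector space C with basis indexed by a set G
  of generators are finitely supported k-valued functions on words over G.
  A word [g1,...,gn] stands for the tensor g1 (x) ... (x) gn; the empty word is the unit.\<close>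

definition fa_mult :: "('g list \<Rightarrow>\<^sub>0 'k::comm_ring_1) \<Rightarrow> ('g list \<Rightarrow>\<^sub>0 'k) \<Rightarrow> ('g list \<Rightarrow>\<^sub>0 'k)" where
  "fa_mult f g = (\<Sum>u\<in>Poly_Mapping.keys f. \<Sum>v\<in>Poly_Mapping.keys g. Poly_Mapping.single (u @ v) (Poly_Mapping.lookup f u * Poly_Mapping.lookup g v))"

definition free_alg :: "'g set \<Rightarrow> ('g list \<Rightarrow>\<^sub>0 'k::zero) set" where
  "free_alg G = {f. \<forall>w\<in>Poly_Mapping.keys f. set w \<subseteq> G}"

inductive_set fa_ideal :: "'g set \<Rightarrow> ('g list \<Rightarrow>\<^sub>0 'k::comm_ring_1) set \<Rightarrow> ('g list \<Rightarrow>\<^sub>0 'k) set"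
  for G S where
  gen: "s \<in> S \<Longrightarrow> s \<in> fa_ideal G S"
| zero: "0 \<in> fa_ideal G S"
| add: "x \<in> fa_ideal G S \<Longrightarrow> y \<in> fa_ideal G S \<Longrightarrow> x + y \<in> fa_ideal G S"
| lmult: "x \<in> fa_ideal G S \<Longrightarrow> a \<in> free_alg G \<Longrightarrow> fa_mult a x \<in> fa_ideal G S"
| rmult: "x \<in> fa_ideal G S \<Longrightarrow> a \<in> free_alg G \<Longrightarrow> fa_mult x a \<in> fa_ideal G S"

text \<open>The generator (p,i,j) stands for the comatrix element t^(p)_i^j of C_p = End(W_p)^*,
  where d p = dim W_p and the basis of W_p is xb p 0, ..., xb p (d p - 1).\<close>
definition gens :: "(int \<Rightarrow> nat) \<Rightarrow> (int \<times> nat \<times> nat) set" where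
  "gens d = {(p, i, j). i < d p \<and> j < d p}"

text \<open>Generators of C_1 = End(B_1)^* only.\<close>
definition gens1 :: "(int \<Rightarrow> nat) \<Rightarrow> (int \<times> nat \<times> nat) set" where
  "gens1 d = {(p, i, j). p = 1 \<and> i < d 1 \<and> j < d 1}"

definition coord :: "('k::field \<Rightarrow> 'b::ab_group_add \<Rightarrow> 'b) \<Rightarrow> (int \<Rightarrow> nat) \<Rightarrow> (int \<Rightarrow> nat \<Rightarrow> 'b)
    \<Rightarrow> 'b \<Rightarrow> int \<Rightarrow> nat \<Rightarrow> 'k" where
  "coord scale d xb y s r = module.representation scale {xb p i | p i. i < d p} y (xb s r)"

text \<open>Coefficients (at the basis vector xb s r of W) of (id (x) u) rho(1) - rho(u(1)),
  where u : k \<rightarrow> B is the unit and W^{(x)0} = k with basis 1, rho(1) = 1 (x) 1.\<close>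
definition unit_rels :: "('k::field \<Rightarrow> 'b::ring_1 \<Rightarrow> 'b) \<Rightarrow> (int \<Rightarrow> nat) \<Rightarrow> (int \<Rightarrow> nat \<Rightarrow> 'b)
    \<Rightarrow> ((int \<times> nat \<times> nat) list \<Rightarrow>\<^sub>0 'k) set" where
  "unit_rels scale d xb =
    {Poly_Mapping.single [] (coord scale d xb 1 s r)
      - (\<Sum>l<d s. Poly_Mapping.single [(s, l, r)] (coord scale d xb 1 s l)) | s r. r < d s}"

text \<open>Coefficients (at xb s r) of (id (x) m) rho(z) - rho(m(z)) for the basis tensors
  z = xb p i (x) xb q j of W (x) W, where m is the multiplication and
  rho(xb p i (x) xb q j) = sum_{a,b} t^(p)_i^a t^(q)_j^b (x) xb p a (x) xb q b.\<close>
definition mult_rels :: "('k::field \<Rightarrow> 'b::ring_1 \<Rightarrow> 'b) \<Rightarrow> (int \<Rightarrow> nat) \<Rightarrow> (int \<Rightarrow> nat \<Rightarrow> 'b)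
    \<Rightarrow> ((int \<times> nat \<times> nat) list \<Rightarrow>\<^sub>0 'k) set" where
  "mult_rels scale d xb =
    {(\<Sum>a<d p. \<Sum>b<d q. Poly_Mapping.single [(p, i, a), (q, j, b)]
                              (coord scale d xb (xb p a * xb q b) s r))
      - (\<Sum>l<d s. Poly_Mapping.single [(s, l, r)] (coord scale d xb (xb p i * xb q j) s l))
     | p q i j s r. i < d p \<and> j < d q \<and> r < d s}"

text \<open>The ideal I_F of T(C_gr) for F = {u, m}; A_gr(B) = T(C_gr) / Agr_ideal.\<close>
definition Agr_ideal :: "('k::field \<Rightarrow> 'b::ring_1 \<Rightarrow> 'b) \<Rightarrow> (int \<Rightarrow> nat) \<Rightarrow> (int \<Rightarrow> nat \<Rightarrow> 'b)
    \<Rightarrow> ((int \<times> nat \<times> nat) list \<Rightarrow>\<^sub>0 'k) set" where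
  "Agr_ideal scale d xb = fa_ideal (gens d) (unit_rels scale d xb \<union> mult_rels scale d xb)"

end

theory Submission
  imports Defs
begin


lemma fa_mult_superset:
  assumes "finite A" "finite B" "Poly_Mapping.keys f \<subseteq> A" "Poly_Mapping.keys g \<subseteq> B"
  shows "fa_mult f g = (\<Sum>u\<in>A. \<Sum>v\<in>B. Poly_Mapping.single (u @ v) (Poly_Mapping.lookup f u * Poly_Mapping.lookup g v))"
proof -
  have "fa_mult f g = (\<Sum>u\<in>Poly_Mapping.keys f. \<Sum>v\<in>B. Poly_Mapping.single (u @ v) (Poly_Mapping.lookup f u * Poly_Mapping.lookup g v))"
    unfolding fa_mult_def
    by (intro sum.cong refl sum.mono_neutral_left assms) (auto simp: in_keys_iff)
  also have "\<dots> = (\<Sum>u\<in>A. \<Sum>v\<in>B. Poly_Mapping.single (u @ v) (Poly_Mapping.lookup f u * Poly_Mapping.lookup g v))"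
    by (intro sum.mono_neutral_left assms) (auto simp: in_keys_iff)
  finally show ?thesis .
qed

lemma fa_mult_add_left: "fa_mult (x + y) z = fa_mult x z + fa_mult y z"
proof -
  let ?A = "Poly_Mapping.keys x \<union> Poly_Mapping.keys y" and ?B = "Poly_Mapping.keys z"
  have k: "Poly_Mapping.keys (x + y) \<subseteq> ?A" by (rule keys_add)
  show ?thesis
    apply (subst (1 2 3) fa_mult_superset[where A="?A" and B="?B"])
    using k by (auto simp: lookup_add distrib_right single_add sum.distrib)
qed

lemma fa_mult_add_right: "fa_mult z (x + y) = fa_mult z x + fa_mult z y"
proof -
  let ?B = "Poly_Mapping.keys x \<union> Poly_Mapping.keys y" and ?A = "Poly_Mapping.keys z"
  have k: "Poly_Mapping.keys (x + y) \<subseteq> ?B" by (rule keys_add)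
  show ?thesis
    apply (subst (1 2 3) fa_mult_superset[where A="?A" and B="?B"])
    using k by (auto simp: lookup_add distrib_left single_add sum.distrib)
qed

lemma fa_mult_zero_left[simp]: "fa_mult 0 z = 0"
  by (simp add: fa_mult_def)
lemma fa_mult_zero_right[simp]: "fa_mult z 0 = 0"
  by (simp add: fa_mult_def)

lemma fa_mult_minus_left: "fa_mult (x - y) z = fa_mult x z - fa_mult y z"
  by (metis add_diff_cancel eq_diff_eq fa_mult_add_left)
lemma fa_mult_minus_right: "fa_mult z (x - y) = fa_mult z x - fa_mult z y"
  by (metis add_diff_cancel eq_diff_eq fa_mult_add_right)

lemma fa_mult_sum_right: "fa_mult z (sum F S) = (\<Sum>s\<in>S. fa_mult z (F s))"
  by (induction S rule: infinite_finite_induct) (auto simp: fa_mult_add_right)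
lemma fa_mult_sum_left: "fa_mult (sum F S) z = (\<Sum>s\<in>S. fa_mult (F s) z)"
  by (induction S rule: infinite_finite_induct) (auto simp: fa_mult_add_left)

lemma fa_mult_single: "fa_mult (Poly_Mapping.single u a) (Poly_Mapping.single v b) = Poly_Mapping.single (u @ v) (a * b)"
  by (subst fa_mult_superset[where A="{u}" and B="{v}"]) auto

lemma fa_mult_unit_neg: "fa_mult (Poly_Mapping.single [] (-1)) x = - x"
proof -
  have "fa_mult (Poly_Mapping.single [] (-1)) x = (\<Sum>v\<in>Poly_Mapping.keys x. Poly_Mapping.single v (- Poly_Mapping.lookup x v))"
    by (subst fa_mult_superset[where A="{[]}" and B="Poly_Mapping.keys x"]) auto
  also have "\<dots> = - (\<Sum>v\<in>Poly_Mapping.keys x. Poly_Mapping.single v (Poly_Mapping.lookup x v))"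
    by (simp add: single_uminus sum_negf)
  also have "(\<Sum>v\<in>Poly_Mapping.keys x. Poly_Mapping.single v (Poly_Mapping.lookup x v)) = x"
    by (rule poly_mapping_eqI) (auto simp: lookup_sum lookup_single when_def in_keys_iff sum.delta')
  finally show ?thesis .
qed

lemma free_alg_add: "x \<in> free_alg G \<Longrightarrow> y \<in> free_alg G \<Longrightarrow> x + y \<in> free_alg G"
  unfolding free_alg_def using keys_add[of x y] by blast

lemma free_alg_zero[simp]: "0 \<in> free_alg G"
  unfolding free_alg_def by simp

lemma free_alg_single: "set w \<subseteq> G \<Longrightarrow> Poly_Mapping.single w c \<in> free_alg G"
  unfolding free_alg_def by auto

lemma free_alg_sum: "(\<And>s. s \<in> S \<Longrightarrow> F s \<in> free_alg G) \<Longrightarrow> sum F S \<in> free_alg G"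
  by (induction S rule: infinite_finite_induct) (auto intro: free_alg_add)

lemma free_alg_mult: "x \<in> free_alg G \<Longrightarrow> y \<in> free_alg G \<Longrightarrow> fa_mult x y \<in> free_alg G"
  unfolding fa_mult_def
  by (intro free_alg_sum free_alg_single) (auto simp: free_alg_def)

lemma free_alg_mono: "G \<subseteq> H \<Longrightarrow> free_alg G \<subseteq> free_alg H"
  unfolding free_alg_def by auto

lemma sum_single_lookup: "(\<Sum>v\<in>Poly_Mapping.keys x. Poly_Mapping.single v (Poly_Mapping.lookup x v)) = x"
  by (rule poly_mapping_eqI) (auto simp: lookup_sum lookup_single when_def in_keys_iff sum.delta')

lemma fa_ideal_minus: "x \<in> fa_ideal G S \<Longrightarrow> y \<in> fa_ideal G S \<Longrightarrow> x - y \<in> fa_ideal G S"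
proof -
  assume x: "x \<in> fa_ideal G S" and y: "y \<in> fa_ideal G S"
  have "fa_mult (Poly_Mapping.single [] (-1)) y \<in> fa_ideal G S"
    by (rule fa_ideal.lmult[OF y free_alg_single]) simp
  hence "- y \<in> fa_ideal G S" by (simp add: fa_mult_unit_neg)
  from fa_ideal.add[OF x this] show ?thesis by simp
qed



definition Rset :: "'g set \<Rightarrow> 'g set \<Rightarrow> ('g list \<Rightarrow>\<^sub>0 'k::comm_ring_1) set \<Rightarrow> ('g list \<Rightarrow>\<^sub>0 'k) set" where
  "Rset G G1 S = {f \<in> free_alg G. \<exists>g\<in>free_alg G1. f - g \<in> fa_ideal G S}"

context fixes G G1 :: "'g set" and S :: "('g list \<Rightarrow>\<^sub>0 'k::comm_ring_1) set"
  assumes G1G: "G1 \<subseteq> G"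
begin

lemma R_FA1: "g \<in> free_alg G1 \<Longrightarrow> g \<in> Rset G G1 S"
proof -
  assume g: "g \<in> free_alg G1"
  then have "g \<in> free_alg G" using free_alg_mono[OF G1G] by auto
  moreover have "g - g \<in> fa_ideal G S" by (simp add: fa_ideal.zero)
  ultimately show ?thesis unfolding Rset_def using g by blast
qed

lemma R_add: "x \<in> Rset G G1 S \<Longrightarrow> y \<in> Rset G G1 S \<Longrightarrow> x + y \<in> Rset G G1 S"
  unfolding Rset_def
proof (clarify, intro conjI)
  fix g h assume "x \<in> free_alg G" "y \<in> free_alg G" "g \<in> free_alg G1" "h \<in> free_alg G1"
    "x - g \<in> fa_ideal G S" "y - h \<in> fa_ideal G S"
  then show "x + y \<in> free_alg G" "\<exists>g\<in>free_alg G1. x + y - g \<in> fa_ideal G S"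
    using fa_ideal.add[of "x - g" G S "y - h"]
    by (auto intro!: free_alg_add bexI[of _ "g + h"] simp: algebra_simps)
qed

lemma R_mult: "x \<in> Rset G G1 S \<Longrightarrow> y \<in> Rset G G1 S \<Longrightarrow> fa_mult x y \<in> Rset G G1 S"
  unfolding Rset_def
proof (clarify, intro conjI)
  fix g h assume x: "x \<in> free_alg G" and y: "y \<in> free_alg G" and g: "g \<in> free_alg G1" and h: "h \<in> free_alg G1"
    and xg: "x - g \<in> fa_ideal G S" and yh: "y - h \<in> fa_ideal G S"
  have gG: "g \<in> free_alg G" using g free_alg_mono[OF G1G] by auto
  have eq: "fa_mult x y - fa_mult g h = fa_mult (x - g) y + fa_mult g (y - h)"
    by (simp add: fa_mult_minus_left fa_mult_minus_right)
  show "fa_mult x y \<in> free_alg G" using x y by (rule free_alg_mult)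
  show "\<exists>g\<in>free_alg G1. fa_mult x y - g \<in> fa_ideal G S"
  proof -
    have 1: "fa_mult x y - fa_mult g h \<in> fa_ideal G S"
      unfolding eq by (rule fa_ideal.add[OF fa_ideal.rmult[OF xg y] fa_ideal.lmult[OF yh gG]])
    have 2: "fa_mult g h \<in> free_alg G1" using g h by (rule free_alg_mult)
    from 1 2 show ?thesis by blast
  qed
qed

lemma R_transfer: "x \<in> Rset G G1 S \<Longrightarrow> x - y \<in> fa_ideal G S \<Longrightarrow> y \<in> free_alg G \<Longrightarrow> y \<in> Rset G G1 S"
proof -
  assume x: "x \<in> Rset G G1 S" and xy: "x - y \<in> fa_ideal G S" and y: "y \<in> free_alg G"
  from x obtain g where g: "g \<in> free_alg G1" "x - g \<in> fa_ideal G S" unfolding Rset_def by blast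
  have "(x - g) - (x - y) \<in> fa_ideal G S" by (rule fa_ideal_minus[OF g(2) xy])
  then have "y - g \<in> fa_ideal G S" by simp
  with g y show ?thesis unfolding Rset_def by blast
qed

lemma R_zero: "0 \<in> Rset G G1 S"
  by (rule R_FA1) simp

lemma R_sum: "(\<And>s. s \<in> A \<Longrightarrow> F s \<in> Rset G G1 S) \<Longrightarrow> sum F A \<in> Rset G G1 S"
  by (induction A rule: infinite_finite_induct) (auto intro: R_add R_zero)

lemma R_smult: "x \<in> Rset G G1 S \<Longrightarrow> fa_mult (Poly_Mapping.single [] c) x \<in> Rset G G1 S"
  by (rule R_mult[OF R_FA1[OF free_alg_single]]) auto

lemma R_single_scale: "Poly_Mapping.single w 1 \<in> Rset G G1 S \<Longrightarrow> Poly_Mapping.single w c \<in> Rset G G1 S"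
  using R_smult[of "Poly_Mapping.single w 1" c] by (simp add: fa_mult_single)

lemma R_word: 
  assumes "\<And>g. g \<in> G \<Longrightarrow> Poly_Mapping.single [g] 1 \<in> Rset G G1 S"
  shows "set w \<subseteq> G \<Longrightarrow> Poly_Mapping.single w 1 \<in> Rset G G1 S"
proof (induction w)
  case Nil
  then show ?case by (intro R_FA1 free_alg_single) auto
next
  case (Cons a w)
  then have "fa_mult (Poly_Mapping.single [a] 1) (Poly_Mapping.single w 1) \<in> Rset G G1 S"
    by (intro R_mult assms) auto
  then show ?case by (simp add: fa_mult_single)
qed

lemma R_all:
  assumes hyp: "\<And>g. g \<in> G \<Longrightarrow> Poly_Mapping.single [g] 1 \<in> Rset G G1 S"
  shows "f \<in> free_alg G \<Longrightarrow> \<exists>g \<in> free_alg G1. f - g \<in> fa_ideal G S"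
proof -
  assume f: "f \<in> free_alg G"
  have "(\<Sum>v\<in>Poly_Mapping.keys f. Poly_Mapping.single v (Poly_Mapping.lookup f v)) \<in> Rset G G1 S"
  proof (rule R_sum)
    fix v assume v: "v \<in> Poly_Mapping.keys f"
    have "set v \<subseteq> G" using f v unfolding free_alg_def by blast
    then show "Poly_Mapping.single v (Poly_Mapping.lookup f v) \<in> Rset G G1 S"
    proof -
      have "Poly_Mapping.single v 1 \<in> Rset G G1 S"
        using R_word hyp \<open>set v \<subseteq> G\<close> by blast
      then show ?thesis by (rule R_single_scale)
    qed
  qed
  then have "f \<in> Rset G G1 S" unfolding sum_single_lookup .
  then show ?thesis unfolding Rset_def by blast
qed

end


locale grset = vector_space scale for scale :: "'k::field \<Rightarrow> 'b::ring_1 \<Rightarrow> 'b" +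
  fixes Bg :: "int \<Rightarrow> 'b set" and d :: "int \<Rightarrow> nat" and xb :: "int \<Rightarrow> nat \<Rightarrow> 'b"
  assumes alg_l: "\<And>a x y. scale a (x * y) = scale a x * y"
    and alg_r: "\<And>a x y. scale a (x * y) = x * scale a y"
    and sub: "\<And>p. subspace (Bg p)"
    and dsum_indep: "\<And>S f. finite S \<Longrightarrow> (\<forall>p\<in>S. f p \<in> Bg p) \<Longrightarrow> sum f S = 0 \<Longrightarrow> (\<forall>p\<in>S. f p = 0)"
    and dsum_span: "span (\<Union>p. Bg p) = UNIV"
    and graded: "\<And>p q x y. x \<in> Bg p \<Longrightarrow> y \<in> Bg q \<Longrightarrow> x * y \<in> Bg (p + q)"
    and neg: "\<And>p. p < 0 \<Longrightarrow> Bg p = {0}"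
    and connected: "Bg 0 = range (\<lambda>a. scale a 1)"
    and generated: "span {prod_list xs | xs. set xs \<subseteq> Bg 1} = UNIV"
    and basis: "\<And>p. inj_on (xb p) {..<d p} \<and> \<not> dependent (xb p ` {..<d p})
                     \<and> span (xb p ` {..<d p}) = Bg p"
begin

definition XB where "XB = {xb p i | p i. i < d p}"

lemma xb_in: "i < d p \<Longrightarrow> xb p i \<in> Bg p"
  using basis[of p] span_base[of "xb p i" "xb p ` {..<d p}"] by auto

lemma xb_nz: "i < d p \<Longrightarrow> xb p i \<noteq> 0"
  using basis[of p] dependent_zero[of "xb p ` {..<d p}"] by force

lemma d_neg: "p < 0 \<Longrightarrow> d p = 0"
proof (rule ccontr)
  assume "p < 0" "d p \<noteq> 0"
  then have "xb p 0 \<in> Bg p" "xb p 0 \<noteq> 0" using xb_in xb_nz by auto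
  with neg[OF \<open>p < 0\<close>] show False by auto
qed

lemma xb_deg: assumes "i < d p" "j < d q" "xb p i = xb q j" shows "p = q"
proof (rule ccontr)
  assume pq: "p \<noteq> q"
  define f where "f t = (if t = p then xb p i else - xb q j)" for t
  have "f p \<in> Bg p" using xb_in[OF assms(1)] by (simp add: f_def)
  moreover have "f q \<in> Bg q" using pq subspace_neg[OF sub xb_in[OF assms(2)]] by (simp add: f_def)
  ultimately have A: "\<forall>t\<in>{p, q}. f t \<in> Bg t" by blast
  have B: "sum f {p, q} = 0" using pq assms(3) by (simp add: f_def)
  have "\<forall>t\<in>{p, q}. f t = 0" by (rule dsum_indep[OF _ A B]) simp
  then have "f p = 0" by blast
  then show False using xb_nz[OF assms(1)] by (simp add: f_def)
qed

lemma xb_eq_iff: assumes "i < d p" "j < d q" shows "xb p i = xb q j \<longleftrightarrow> p = q \<and> i = j"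
  using xb_deg[OF assms] basis[of p] assms by (auto simp: inj_on_def)

lemma graded_component:
  fixes deg :: "'c \<Rightarrow> int"
  assumes T: "finite T" and w: "\<And>t. t \<in> T \<Longrightarrow> w t \<in> Bg (deg t)" and y: "y \<in> Bg s"
    and ysum: "y = sum w T"
  shows "y = sum w {t\<in>T. deg t = s}"
proof -
  define F where "F p = sum w {t\<in>T. deg t = p}" for p
  have FB: "F p \<in> Bg p" for p
    unfolding F_def by (rule subspace_sum[OF sub]) (auto intro: w)
  have "y = sum F (deg ` T)" unfolding ysum F_def by (rule sum.image_gen[OF T])
  moreover have "sum F (insert s (deg ` T)) = sum F (deg ` T)"
    by (cases "s \<in> deg ` T") (auto simp: F_def T sum.insert intro!: sum.neutral)
  ultimately have sF: "sum F (insert s (deg ` T)) = y" by simp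
  define f where "f p = F p - (if p = s then y else 0)" for p
  have B: "sum f (insert s (deg ` T)) = 0"
    unfolding f_def sum_subtractf using sF T by (simp add: sum.delta)
  have A: "\<forall>p\<in>insert s (deg ` T). f p \<in> Bg p"
    using FB y by (auto simp: f_def intro!: subspace_diff[OF sub] subspace_0[OF sub])
  have "\<forall>p\<in>insert s (deg ` T). f p = 0" by (rule dsum_indep[OF _ A B]) (simp add: T)
  then have "f s = 0" by blast
  then show ?thesis by (simp add: f_def F_def)
qed

lemma XB_indep: "\<not> dependent XB"
  unfolding independent_explicit_module
proof (intro allI impI)
  fix T u v assume T: "finite T" "T \<subseteq> XB" and s0: "(\<Sum>v\<in>T. scale (u v) v) = 0" and v: "v \<in> T"
  define deg where "deg w = (SOME p. \<exists>i<d p. w = xb p i)" for w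
  have degw: "\<exists>i<d (deg w). w = xb (deg w) i" if "w \<in> XB" for w
  proof -
    from that obtain p i where "i < d p" "w = xb p i" unfolding XB_def by blast
    then have "\<exists>p. \<exists>i<d p. w = xb p i" by blast
    then show ?thesis unfolding deg_def by (rule someI_ex)
  qed
  have "0 = (\<Sum>w\<in>{t\<in>T. deg t = deg v}. scale (u w) w)"
  proof (rule graded_component[OF T(1)])
    show "scale (u t) t \<in> Bg (deg t)" if "t \<in> T" for t
    proof -
      from degw[of t] that T(2) obtain i where "i < d (deg t)" "t = xb (deg t) i" by blast
      then have "t \<in> Bg (deg t)" using xb_in by metis
      then show ?thesis by (rule subspace_scale[OF sub])
    qed
    show "0 \<in> Bg (deg v)" by (rule subspace_0[OF sub])
  qed (use s0 in simp)
  moreover have "{t\<in>T. deg t = deg v} \<subseteq> xb (deg v) ` {..<d (deg v)}"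
  proof
    fix t assume "t \<in> {t\<in>T. deg t = deg v}"
    then have "t \<in> XB" "deg t = deg v" using T(2) by auto
    then obtain i where "i < d (deg v)" "t = xb (deg v) i" using degw[of t] by metis
    then show "t \<in> xb (deg v) ` {..<d (deg v)}" by blast
  qed
  ultimately show "u v = 0"
    using basis[of "deg v"] v T(1) by (intro independentD[where s="xb (deg v) ` {..<d (deg v)}" and t="{t\<in>T. deg t = deg v}"]) auto
qed

lemma XB_span: "span XB = UNIV"
proof -
  have "Bg p \<subseteq> span XB" for p
    using basis[of p] span_mono[of "xb p ` {..<d p}" XB] unfolding XB_def by auto
  then have "(\<Union>p. Bg p) \<subseteq> span XB" by auto
  then have "span (\<Union>p. Bg p) \<subseteq> span XB" by (rule span_minimal) simp
  then show ?thesis using dsum_span by auto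
qed

lemma coord_xb: assumes "i < d p" "r < d s"
  shows "coord scale d xb (xb p i) s r = (if p = s \<and> i = r then 1 else 0)"
proof -
  have "xb p i \<in> XB" using assms unfolding XB_def by auto
  then show ?thesis unfolding coord_def XB_def[symmetric]
    using representation_basis[OF XB_indep] xb_eq_iff[OF assms(2) assms(1)] by auto
qed

lemma coord_comb:
  "coord scale d xb (\<Sum>t\<in>T. scale (e t) (h t)) s r = (\<Sum>t\<in>T. e t * coord scale d xb (h t) s r)"
  unfolding coord_def XB_def[symmetric]
  by (simp add: representation_sum[OF XB_indep] representation_scale[OF XB_indep] XB_span)

lemma coord_scale: "coord scale d xb (scale a y) s r = a * coord scale d xb y s r"
  unfolding coord_def XB_def[symmetric]
  by (simp add: representation_scale[OF XB_indep] XB_span)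

lemma Bg_expand: assumes "y \<in> Bg p" shows "\<exists>a. y = (\<Sum>i<d p. scale (a i) (xb p i))"
proof -
  have "y \<in> span (xb p ` {..<d p})" using basis[of p] assms by auto
  then obtain u where u: "y = (\<Sum>v\<in>xb p ` {..<d p}. scale (u v) v)"
    using span_finite[of "xb p ` {..<d p}"] by auto
  also have "\<dots> = (\<Sum>i<d p. scale (u (xb p i)) (xb p i))"
    using basis[of p] by (subst sum.reindex) auto
  finally have "y = (\<Sum>i<d p. scale (u (xb p i)) (xb p i))" .
  then show ?thesis by (rule exI[of _ "\<lambda>i. u (xb p i)"])
qed

end


lemma single_sum_k: "(\<Sum>x\<in>A. Poly_Mapping.single k (f x)) = Poly_Mapping.single k (sum f A)"
  by (induction A rule: infinite_finite_induct) (auto simp: single_add)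

context grset begin

lemma one_Bg0: "1 \<in> Bg 0"
proof -
  have "scale 1 1 = (1::'b)" by simp
  then show ?thesis unfolding connected by (metis rangeI)
qed

lemma prod_in: "set xs \<subseteq> Bg 1 \<Longrightarrow> prod_list xs \<in> Bg (int (length xs))"
proof (induction xs)
  case Nil
  then show ?case using one_Bg0 by simp
next
  case (Cons x xs)
  then have "x * prod_list xs \<in> Bg (1 + int (length xs))" by (intro graded) auto
  then show ?case by simp
qed

lemma Bg_prods:
  assumes y: "y \<in> Bg (int n)"
  shows "y \<in> span {prod_list xs | xs. set xs \<subseteq> Bg 1 \<and> length xs = n}"
proof -
  have "y \<in> span {prod_list xs | xs. set xs \<subseteq> Bg 1}" using generated by simp
  then obtain T r where T: "finite T" "T \<subseteq> {prod_list xs | xs. set xs \<subseteq> Bg 1}"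
    and yT: "y = (\<Sum>a\<in>T. scale (r a) a)"
    unfolding span_explicit by blast
  define ls where "ls a = (SOME xs. set xs \<subseteq> Bg 1 \<and> a = prod_list xs)" for a
  define deg where "deg a = int (length (ls a))" for a
  have lsa: "set (ls a) \<subseteq> Bg 1 \<and> a = prod_list (ls a)" if "a \<in> T" for a
  proof -
    from that T(2) have "\<exists>xs. set xs \<subseteq> Bg 1 \<and> a = prod_list xs" by blast
    then show ?thesis unfolding ls_def by (rule someI_ex)
  qed
  have "y = (\<Sum>a\<in>{t\<in>T. deg t = int n}. scale (r a) a)"
  proof (rule graded_component[OF T(1) _ y yT])
    fix t assume "t \<in> T"
    then have "t \<in> Bg (deg t)" using lsa[of t] prod_in unfolding deg_def by metis
    then show "scale (r t) t \<in> Bg (deg t)" by (rule subspace_scale[OF sub])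
  qed
  also have "\<dots> \<in> span {prod_list xs | xs. set xs \<subseteq> Bg 1 \<and> length xs = n}"
  proof (rule span_sum, rule span_scale, rule span_base)
    fix t assume "t \<in> {t\<in>T. deg t = int n}"
    then have "t \<in> T" "length (ls t) = n" unfolding deg_def by auto
    then show "t \<in> {prod_list xs | xs. set xs \<subseteq> Bg 1 \<and> length xs = n}"
      using lsa[of t] by blast
  qed
  finally show ?thesis .
qed

lemma Bg_comb:
  assumes y: "y \<in> Bg (int m + 1)"
  shows "\<exists>e. y = (\<Sum>ij\<in>{..<d 1} \<times> {..<d (int m)}. scale (e ij) (xb 1 (fst ij) * xb (int m) (snd ij)))"
proof -
  define P where "P = {..<d 1} \<times> {..<d (int m)}"
  define h where "h ij = xb 1 (fst ij) * xb (int m) (snd ij)" for ij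
  define C where "C = {z. \<exists>e. z = (\<Sum>ij\<in>P. scale (e ij) (h ij))}"
  have subC: "subspace C"
  proof (rule subspaceI)
    show "0 \<in> C" unfolding C_def by (rule CollectI, rule exI[of _ "\<lambda>_. 0"]) simp
  next
    fix x y assume "x \<in> C" "y \<in> C"
    then obtain e1 e2 where "x = (\<Sum>ij\<in>P. scale (e1 ij) (h ij))" "y = (\<Sum>ij\<in>P. scale (e2 ij) (h ij))"
      unfolding C_def by blast
    then have eq: "x + y = (\<Sum>ij\<in>P. scale (e1 ij + e2 ij) (h ij))"
      by (simp add: scale_left_distrib sum.distrib)
    show "x + y \<in> C" unfolding C_def mem_Collect_eq
      by (rule exI[of _ "\<lambda>ij. e1 ij + e2 ij"]) (simp add: eq)
  next
    fix c x assume "x \<in> C"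
    then obtain e1 where "x = (\<Sum>ij\<in>P. scale (e1 ij) (h ij))"
      unfolding C_def by blast
    then have eq: "scale c x = (\<Sum>ij\<in>P. scale (c * e1 ij) (h ij))"
      by (simp add: scale_sum_right)
    show "scale c x \<in> C" unfolding C_def mem_Collect_eq
      by (rule exI[of _ "\<lambda>ij. c * e1 ij"]) (simp add: eq)
  qed
  have QC: "{prod_list xs | xs. set xs \<subseteq> Bg 1 \<and> length xs = Suc m} \<subseteq> C"
  proof
    fix z assume "z \<in> {prod_list xs | xs. set xs \<subseteq> Bg 1 \<and> length xs = Suc m}"
    then obtain xs where xs: "set xs \<subseteq> Bg 1" "length xs = Suc m" "z = prod_list xs" by blast
    then obtain x xs' where xs': "xs = x # xs'" by (cases xs) auto
    with xs have x: "x \<in> Bg 1" and z': "prod_list xs' \<in> Bg (int m)"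
      using prod_in[of xs'] by auto
    obtain a where a: "x = (\<Sum>i<d 1. scale (a i) (xb 1 i))" using Bg_expand[OF x] by blast
    obtain b where b: "prod_list xs' = (\<Sum>j<d (int m). scale (b j) (xb (int m) j))"
      using Bg_expand[OF z'] by blast
    have prodsc: "scale u v * scale u' v' = scale (u * u') (v * v')" for u u' v v'
      by (metis alg_l alg_r scale_scale mult.commute)
    have "z = x * prod_list xs'" using xs xs' by simp
    also have "\<dots> = (\<Sum>i<d 1. \<Sum>j<d (int m). scale (a i * b j) (xb 1 i * xb (int m) j))"
      unfolding a b by (simp add: sum_distrib_left sum_distrib_right prodsc sum.swap[of _ "{..<d 1}"])
    also have "\<dots> = (\<Sum>ij\<in>P. scale ((\<lambda>ij. a (fst ij) * b (snd ij)) ij) (h ij))"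
      unfolding P_def h_def by (subst sum.cartesian_product) (simp add: case_prod_beta)
    finally have eq: "z = (\<Sum>ij\<in>P. scale ((\<lambda>ij. a (fst ij) * b (snd ij)) ij) (h ij))" .
    show "z \<in> C" unfolding C_def mem_Collect_eq
      by (rule exI[of _ "\<lambda>ij. a (fst ij) * b (snd ij)"]) (simp add: eq)
  qed
  have "y \<in> span {prod_list xs | xs. set xs \<subseteq> Bg 1 \<and> length xs = Suc m}"
    using Bg_prods[of y "Suc m"] y by (simp add: add.commute)
  then have "y \<in> C" using span_minimal[OF QC subC] by blast
  then show ?thesis unfolding C_def P_def h_def by blast
qed

lemma right_inverse:
  assumes l: "l < d (int m + 1)"
  shows "\<exists>e. \<forall>l'<d (int m + 1). (\<Sum>ij\<in>{..<d 1} \<times> {..<d (int m)}.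
            e ij * coord scale d xb (xb 1 (fst ij) * xb (int m) (snd ij)) (int m + 1) l')
          = (if l = l' then 1 else 0)"
proof -
  obtain e where e: "xb (int m + 1) l = (\<Sum>ij\<in>{..<d 1} \<times> {..<d (int m)}. scale (e ij) (xb 1 (fst ij) * xb (int m) (snd ij)))"
    using Bg_comb[OF xb_in[OF l]] by blast
  show ?thesis
  proof (intro exI allI impI)
    fix l' assume l': "l' < d (int m + 1)"
    have "(if l = l' then 1 else 0) = coord scale d xb (xb (int m + 1) l) (int m + 1) l'"
      using coord_xb[OF l l'] by simp
    also have "\<dots> = (\<Sum>ij\<in>{..<d 1} \<times> {..<d (int m)}.
            e ij * coord scale d xb (xb 1 (fst ij) * xb (int m) (snd ij)) (int m + 1) l')"
      by (subst e) (rule coord_comb)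
    finally show "(\<Sum>ij\<in>{..<d 1} \<times> {..<d (int m)}.
            e ij * coord scale d xb (xb 1 (fst ij) * xb (int m) (snd ij)) (int m + 1) l')
          = (if l = l' then 1 else 0)" by simp
  qed
qed

lemma d0_le: "d 0 \<le> 1"
proof -
  have "xb 0 ` {..<d 0} \<subseteq> Bg 0" using xb_in by auto
  also have "Bg 0 = span {1}" using span_singleton[of 1] connected by simp
  finally have "xb 0 ` {..<d 0} \<subseteq> span {1}" .
  then have "card (xb 0 ` {..<d 0}) \<le> card {1::'b}"
    using independent_span_bound[of "{1}" "xb 0 ` {..<d 0}"] basis[of 0] by auto
  moreover have "card (xb 0 ` {..<d 0}) = d 0" using basis[of 0] by (simp add: card_image)
  ultimately show ?thesis by simp
qed

lemma coord_one_nz: assumes "d 0 = 1" shows "coord scale d xb 1 0 0 \<noteq> 0"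
proof
  assume c0: "coord scale d xb 1 0 0 = 0"
  obtain a where a: "1 = (\<Sum>i<d 0. scale (a i) (xb 0 i))" using Bg_expand[OF one_Bg0] by blast
  then have a': "1 = scale (a 0) (xb 0 0)" using assms by simp
  have "coord scale d xb 1 0 0 = a 0"
    apply (subst a') using coord_scale coord_xb[of 0 0 0 0] assms by simp
  then have "a 0 = 0" using c0 by simp
  then have "(1::'b) = 0" using a' by simp
  then have "xb 0 0 = 0" by (metis mult_1_right mult_zero_right)
  then show False using xb_nz[of 0 0] assms by simp
qed

end


context grset begin

abbreviation "RS \<equiv> unit_rels scale d xb \<union> mult_rels scale d xb"
abbreviation "RR \<equiv> Rset (gens d) (gens1 d) RS"

lemma gens1_sub: "gens1 d \<subseteq> gens d"
  unfolding gens1_def gens_def by auto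

lemma gen_good_nat:
  "\<forall>l r. l < d (int n) \<and> r < d (int n) \<longrightarrow> Poly_Mapping.single [(int n, l, r)] 1 \<in> RR"
proof (induction n rule: less_induct)
  case (less n)
  show ?case
  proof (intro allI impI, elim conjE)
    fix l r assume l: "l < d (int n)" and r: "r < d (int n)"
    have "n = 0 \<or> n = 1 \<or> (n = Suc (n - 1) \<and> n - 1 \<ge> 1)" by arith
    then consider "n = 0" | "n = 1" | m where "n = Suc m" "m \<ge> 1" by blast
    then show "Poly_Mapping.single [(int n, l, r)] 1 \<in> RR"
    proof cases
      case 1
      then have d0: "d 0 = 1" using l d0_le by simp
      then have lr: "l = 0" "r = 0" using l r 1 by auto
      define c where "c = coord scale d xb 1 0 0"
      have c: "c \<noteq> 0" unfolding c_def by (rule coord_one_nz[OF d0])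
      have "Poly_Mapping.single [] (coord scale d xb 1 0 0)
          - (\<Sum>l<d 0. Poly_Mapping.single [(0, l, 0)] (coord scale d xb 1 0 l)) \<in> unit_rels scale d xb"
        unfolding unit_rels_def
        by (rule CollectI, rule exI[of _ "0::int"], rule exI[of _ "0::nat"]) (simp add: d0)
      then have I0: "Poly_Mapping.single [] c - Poly_Mapping.single [(0, 0, 0)] c \<in> fa_ideal (gens d) RS"
        using d0 by (auto simp: c_def lessThan_Suc intro: fa_ideal.gen)
      have R0: "Poly_Mapping.single [] c \<in> RR"
        by (rule R_FA1[OF gens1_sub free_alg_single]) simp
      have F0: "Poly_Mapping.single [(0, 0, 0)] c \<in> free_alg (gens d)"
        by (rule free_alg_single) (simp add: gens_def d0)
      have "Poly_Mapping.single [(0, 0, 0)] c \<in> RR"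
        by (rule R_transfer[OF gens1_sub R0 I0 F0])
      then have "fa_mult (Poly_Mapping.single [] (1 / c)) (Poly_Mapping.single [(0, 0, 0)] c) \<in> RR"
        by (rule R_smult[OF gens1_sub])
      then show ?thesis using 1 lr c by (simp add: fa_mult_single)
    next
      case 2
      show ?thesis
        by (rule R_FA1[OF gens1_sub free_alg_single]) (use 2 l r in \<open>simp add: gens1_def\<close>)
    next
      case 3
      define s where "s = int m + 1"
      have sn: "int n = s" using 3 s_def by simp
      define P where "P = {..<d 1} \<times> {..<d (int m)}"
      define C where "C i j l' = coord scale d xb (xb 1 i * xb (int m) j) s l'" for i j l'
      have IHm: "Poly_Mapping.single [(int m, j, b)] 1 \<in> RR" if "j < d (int m)" "b < d (int m)" for j b
        using less[of m] 3 that by auto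
      have IH1: "Poly_Mapping.single [(1, i, a)] 1 \<in> RR" if "i < d 1" "a < d 1" for i a
        by (rule R_FA1[OF gens1_sub free_alg_single]) (use that in \<open>simp add: gens1_def\<close>)
      have W: "Poly_Mapping.single [(1, i, a), (int m, j, b)] c \<in> RR"
        if "i < d 1" "a < d 1" "j < d (int m)" "b < d (int m)" for i a j b c
      proof -
        have "fa_mult (Poly_Mapping.single [(1, i, a)] 1) (Poly_Mapping.single [(int m, j, b)] 1) \<in> RR"
          by (rule R_mult[OF gens1_sub IH1 IHm]) (use that in auto)
        then have "Poly_Mapping.single [(1, i, a), (int m, j, b)] 1 \<in> RR"
          by (simp add: fa_mult_single)
        then show ?thesis by (rule R_single_scale[OF gens1_sub])
      qed
      define RHS where "RHS i j = (\<Sum>l<d s. Poly_Mapping.single [(s, l, r)] (C i j l))" for i j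
      have RHS: "RHS i j \<in> RR" if ij: "i < d 1" "j < d (int m)" for i j
      proof (rule R_transfer[OF gens1_sub])
        define L where "L = (\<Sum>a<d 1. \<Sum>b<d (int m). Poly_Mapping.single [(1, i, a), (int m, j, b)]
                              (coord scale d xb (xb 1 a * xb (int m) b) s r))"
        show "L \<in> RR" unfolding L_def
          by (intro R_sum[OF gens1_sub] W) (use ij in auto)
        have "L - RHS i j \<in> mult_rels scale d xb"
          unfolding mult_rels_def L_def RHS_def C_def using ij r sn by blast
        then show "L - RHS i j \<in> fa_ideal (gens d) RS" by (auto intro: fa_ideal.gen)
        show "RHS i j \<in> free_alg (gens d)" unfolding RHS_def
          by (intro free_alg_sum free_alg_single) (use r sn in \<open>auto simp: gens_def\<close>)
      qed
      obtain e where e: "\<And>l'. l' < d s \<Longrightarrow> (\<Sum>ij\<in>P. e ij * C (fst ij) (snd ij) l') = (if l = l' then 1 else 0)"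
        using right_inverse[of l m] l sn unfolding P_def C_def s_def by auto
      have "(\<Sum>ij\<in>P. fa_mult (Poly_Mapping.single [] (e ij)) (RHS (fst ij) (snd ij))) \<in> RR"
        by (intro R_sum[OF gens1_sub] R_smult[OF gens1_sub] RHS) (auto simp: P_def)
      also have "(\<Sum>ij\<in>P. fa_mult (Poly_Mapping.single [] (e ij)) (RHS (fst ij) (snd ij)))
          = (\<Sum>ij\<in>P. \<Sum>l'<d s. Poly_Mapping.single [(s, l', r)] (e ij * C (fst ij) (snd ij) l'))"
        unfolding RHS_def by (simp add: fa_mult_sum_right fa_mult_single)
      also have "\<dots> = (\<Sum>l'<d s. Poly_Mapping.single [(s, l', r)] (\<Sum>ij\<in>P. e ij * C (fst ij) (snd ij) l'))"
        by (subst sum.swap) (simp add: single_sum_k)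
      also have "\<dots> = (\<Sum>l'<d s. if l' = l then Poly_Mapping.single [(s, l, r)] 1 else 0)"
        by (rule sum.cong) (auto simp: e)
      also have "\<dots> = Poly_Mapping.single [(s, l, r)] 1"
        using l sn by simp
      finally show ?thesis using sn by simp
    qed
  qed
qed

lemma gen_good: "g \<in> gens d \<Longrightarrow> Poly_Mapping.single [g] 1 \<in> RR"
proof -
  assume g: "g \<in> gens d"
  obtain p l r where gp: "g = (p, l, r)" "l < d p" "r < d p" using g unfolding gens_def by auto
  then have "p \<ge> 0" using d_neg[of p] by (cases "p < 0") auto
  then obtain n where "p = int n" by (metis nonneg_eq_int)
  then show ?thesis using gen_good_nat[of n] gp by auto
qed

end

theorem mainTheorem5:
  fixes scale :: "'k::field \<Rightarrow> 'b::ring_1 \<Rightarrow> 'b"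
    and Bg :: "int \<Rightarrow> 'b set"
    and d :: "int \<Rightarrow> nat"
    and xb :: "int \<Rightarrow> nat \<Rightarrow> 'b"
  assumes vs: "vector_space scale"
    and alg_l: "\<And>a x y. scale a (x * y) = scale a x * y"
    and alg_r: "\<And>a x y. scale a (x * y) = x * scale a y"
    and sub: "\<And>p. module.subspace scale (Bg p)"
    and dsum_indep: "\<And>S f. finite S \<Longrightarrow> (\<forall>p\<in>S. f p \<in> Bg p) \<Longrightarrow> sum f S = 0 \<Longrightarrow> (\<forall>p\<in>S. f p = 0)"
    and dsum_span: "module.span scale (\<Union>p. Bg p) = UNIV"
    and graded: "\<And>p q x y. x \<in> Bg p \<Longrightarrow> y \<in> Bg q \<Longrightarrow> x * y \<in> Bg (p + q)"
    and neg: "\<And>p. p < 0 \<Longrightarrow> Bg p = {0}"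
    and connected: "Bg 0 = range (\<lambda>a. scale a 1)"
    and generated: "module.span scale {prod_list xs | xs. set xs \<subseteq> Bg 1} = UNIV"
    and basis: "\<And>p. inj_on (xb p) {..<d p} \<and> \<not> module.dependent scale (xb p ` {..<d p})
                     \<and> module.span scale (xb p ` {..<d p}) = Bg p"
  shows "\<forall>f \<in> free_alg (gens d). \<exists>g \<in> free_alg (gens1 d). f - g \<in> Agr_ideal scale d xb"
proof -
  interpret grset scale Bg d xb
    by (rule grset.intro[OF vs], unfold_locales) (use assms in auto)
  show ?thesis unfolding Agr_ideal_def
    using R_all[OF gens1_sub gen_good] by blast
qed


end
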